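(* Suppose $\tau_f\in(\tau_c,+\infty)$. Then $$p'(\tau)<\frac{2h(\tau)-2h(\tau_f)}{\tau^2-\tau_f^2}<p'(\tau_f)\quad\text{for }\tau\in(1,\tau_f).$$ Moreover, for any $\tau_b\in(1,\tau_f)$ Liu's extended entropy condition holds: $$\frac{2h(\tau_f)-2h(\tau_b)}{\tau_f^2-\tau_b^2}<\frac{2h(\tau_f)-2h(\tau)}{\tau_f^2-\tau^2}\quad\text{for all }\tau\in(\tau_b,\tau_f).$$
   Context: The pressure is $p(\tau)=\frac{\mathcal S}{(\tau-1)^\gamma}-\frac{1}{\tau^2}$ for $\tau>1$, with constants $1<\gamma<2$, $\mathcal S>0$, assumed such that there exist $1<\tau_1^i<\tau_2^i$ with $p'<0$ on $(1,\infty)$, $p''>0$ on $(1,\tau_1^i)\cup(\tau_2^i,\infty)$, $p''<0$ on $(\tau_1^i,\tau_2^i)$. The function $h$ satisfies $h'(\tau)=\tau p'(\tau)$. $\tau_c$ denotes the unique $\tau_c\in(\tau_1^i,\infty)$ with $p'(\tau_1^i)=\frac{2h(\tau_c)-2h(\tau_1^i)}{\tau_c^2-(\tau_1^i)^2}$. *)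

theory Defs
  imports "HOL-Analysis.Analysis"
begin

definition pres :: "real \<Rightarrow> real \<Rightarrow> real \<Rightarrow> real" where
  "pres S \<gamma> \<tau> = S / ((\<tau> - 1) powr \<gamma>) - 1 / \<tau>\<^sup>2"

end

theory Submission
  imports Defs
begin


lemma powr_shift_d:
  assumes "1 < t"
  shows "((\<lambda>x. (x - 1) powr r) has_real_derivative r * (t - 1) powr (r - 1)) (at t)"
proof -
  have i: "((\<lambda>x. x - 1) has_real_derivative 1) (at t)"
    by (auto intro!: derivative_eq_intros)
  from DERIV_chain2[OF has_real_derivative_powr[of "t-1" r] i] assms show ?thesis by simp
qed

lemma pres_d1:
  assumes "1 < t"
  shows "(pres S g has_real_derivative (- S * g * (t - 1) powr (- g - 1) + 2 / t ^ 3)) (at t)"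
proof -
  have e: "pres S g = (\<lambda>x. S * (x - 1) powr (-g) - 1 / (x ^ 2))"
    by (auto simp: pres_def fun_eq_iff powr_minus divide_inverse)
  have a: "((\<lambda>x. 1 / (x ^ 2)) has_real_derivative - 2 / t ^ 3) (at t)"
    using assms by (auto intro!: derivative_eq_intros simp: field_simps power2_eq_square power3_eq_cube)
  note b = DERIV_cmult[OF powr_shift_d[OF assms, of "-g"], of S]
  show ?thesis unfolding e
    using DERIV_diff[OF b a] by (simp add: algebra_simps)
qed

lemma pres_d2:
  assumes "1 < t"
  shows "((\<lambda>t. - S * g * (t - 1) powr (- g - 1) + 2 / t ^ 3) has_real_derivative
          (S * g * (g + 1) * (t - 1) powr (- g - 2) - 6 / t ^ 4)) (at t)"
proof -
  have a: "((\<lambda>x. 2 / (x ^ 3)) has_real_derivative - 6 / t ^ 4) (at t)"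
    using assms by (auto intro!: derivative_eq_intros simp: field_simps power2_eq_square power3_eq_cube eval_nat_numeral)
  note b = DERIV_cmult[OF powr_shift_d[OF assms, of "-g-1"], of "-S*g"]
  show ?thesis 
    using DERIV_add[OF b a] by (simp add: algebra_simps)
qed


lemma key:
  fixes q q2 h :: "real \<Rightarrow> real" and \<tau>1 \<tau>2 \<tau>c \<tau>f :: real
  assumes Dq: "\<And>t. 1 < t \<Longrightarrow> (q has_real_derivative q2 t) (at t)"
    and Dh: "\<And>t. 1 < t \<Longrightarrow> (h has_real_derivative t * q t) (at t)"
    and tau12: "1 < \<tau>1" "\<tau>1 < \<tau>2"
    and s1: "\<And>t. 1 < t \<Longrightarrow> t < \<tau>1 \<Longrightarrow> q2 t > 0"
    and s2: "\<And>t. \<tau>2 < t \<Longrightarrow> q2 t > 0"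
    and s3: "\<And>t. \<tau>1 < t \<Longrightarrow> t < \<tau>2 \<Longrightarrow> q2 t < 0"
    and tauc: "\<tau>1 < \<tau>c" "q \<tau>1 = (2 * h \<tau>c - 2 * h \<tau>1) / (\<tau>c\<^sup>2 - \<tau>1\<^sup>2)"
    and tauf: "\<tau>c < \<tau>f"
  shows "(\<forall>\<tau>. 1 < \<tau> \<and> \<tau> < \<tau>f \<longrightarrow>
            q \<tau> < (2 * h \<tau> - 2 * h \<tau>f) / (\<tau>\<^sup>2 - \<tau>f\<^sup>2) \<and>
            (2 * h \<tau> - 2 * h \<tau>f) / (\<tau>\<^sup>2 - \<tau>f\<^sup>2) < q \<tau>f)
       \<and> (\<forall>\<tau>b. 1 < \<tau>b \<and> \<tau>b < \<tau>f \<longrightarrow>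
            (\<forall>\<tau>. \<tau>b < \<tau> \<and> \<tau> < \<tau>f \<longrightarrow>
               (2 * h \<tau>f - 2 * h \<tau>b) / (\<tau>f\<^sup>2 - \<tau>b\<^sup>2) < (2 * h \<tau>f - 2 * h \<tau>) / (\<tau>f\<^sup>2 - \<tau>\<^sup>2)))"
proof -
  have contq: "continuous_on {a..b} q" if "1 < a" for a b
    using that by (intro continuous_at_imp_continuous_on ballI DERIV_isCont[OF Dq]) auto
  have qinc: "q a < q b" if "1 < a" "a < b" "\<And>x. a < x \<Longrightarrow> x < b \<Longrightarrow> q2 x > 0" for a b
    using that by (intro DERIV_pos_imp_increasing_open[OF \<open>a < b\<close> _ contq]) (auto intro!: exI Dq)
  have qdec: "q b < q a" if "1 < a" "a < b" "\<And>x. a < x \<Longrightarrow> x < b \<Longrightarrow> q2 x < 0" for a b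
    using that by (intro DERIV_neg_imp_decreasing_open[OF \<open>a < b\<close> _ contq]) (auto intro!: exI Dq)
  define K where "K t = 2 * h t - 2 * h \<tau>1 - q \<tau>1 * (t\<^sup>2 - \<tau>1\<^sup>2)" for t
  have DK: "(K has_real_derivative 2 * t * q t - q \<tau>1 * (2 * t)) (at t)" if "1 < t" for t
    unfolding K_def[abs_def] using that
    by (auto intro!: derivative_eq_intros Dh simp: power2_eq_square)
  have Kc: "K \<tau>c = 0"
  proof -
    have "\<tau>c\<^sup>2 - \<tau>1\<^sup>2 > 0" using tauc tau12 by (simp add: power_strict_mono)
    then show ?thesis using tauc(2) unfolding K_def by (simp add: field_simps)
  qed
  have K1: "K \<tau>1 = 0" unfolding K_def by simp
  obtain \<eta> where eta: "\<tau>1 < \<eta>" "\<eta> < \<tau>c" "K \<tau>c - K \<tau>1 = (\<tau>c - \<tau>1) * (2 * \<eta> * q \<eta> - q \<tau>1 * (2 * \<eta>))"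
    using MVT2[OF tauc(1), of K "\<lambda>t. 2 * t * q t - q \<tau>1 * (2 * t)"] DK tau12 by force
  have "((\<tau>c - \<tau>1) * (2 * \<eta>)) * (q \<eta> - q \<tau>1) = 0"
    using eta(3) Kc K1 by (simp add: algebra_simps)
  moreover have "(\<tau>c - \<tau>1) * (2 * \<eta>) \<noteq> 0" using eta tau12 by auto
  ultimately have qeta: "q \<eta> = q \<tau>1" by simp
  have eta2: "\<tau>2 < \<eta>"
  proof (rule ccontr)
    assume "\<not> \<tau>2 < \<eta>"
    then have "q \<eta> < q \<tau>1" using eta tau12 by (intro qdec s3) auto
    then show False using qeta by simp
  qed
  have qbig: "q s > q \<tau>1" if "\<eta> < s" for s
    using qinc[of \<eta> s] that eta2 tau12 s2 qeta by auto
  obtain \<xi> where xi: "\<tau>c < \<xi>" "\<xi> < \<tau>f" "K \<tau>f - K \<tau>c = (\<tau>f - \<tau>c) * (2 * \<xi> * q \<xi> - q \<tau>1 * (2 * \<xi>))"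
    using MVT2[OF tauf, of K "\<lambda>t. 2 * t * q t - q \<tau>1 * (2 * t)"] DK tau12 tauc by force
  have "q \<xi> > q \<tau>1" using qbig xi eta by auto
  moreover have "\<xi> > 0" using xi tauc tau12 by simp
  ultimately have "(2 * \<xi>) * (q \<xi> - q \<tau>1) > 0" by simp
  then have "2 * \<xi> * q \<xi> - q \<tau>1 * (2 * \<xi>) > 0" by (simp add: algebra_simps)
  then have Kf: "K \<tau>f > 0" using xi(3) Kc tauf by simp
  have qf: "q \<tau>f > q \<tau>1" using qbig eta tauf by auto
  have qlt: "q s < q \<tau>f" if "1 < s" "s < \<tau>f" for s
  proof -
    consider "s < \<tau>1" | "s = \<tau>1" | "\<tau>1 < s" "s \<le> \<tau>2" | "\<tau>2 < s" by linarith
    then show ?thesis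
    proof cases
      case 1
      then have "q s < q \<tau>1" using that by (intro qinc s1) auto
      then show ?thesis using qf by simp
    next
      case 2 then show ?thesis using qf by simp
    next
      case 3
      then have "q s < q \<tau>1" using that tau12 by (intro qdec s3) auto
      then show ?thesis using qf by simp
    next
      case 4
      then show ?thesis using that tau12 by (intro qinc s2) auto
    qed
  qed
  define G where "G t = 2 * h \<tau>f - 2 * h t - q t * (\<tau>f\<^sup>2 - t\<^sup>2)" for t
  have DG: "(G has_real_derivative - (q2 t * (\<tau>f\<^sup>2 - t\<^sup>2))) (at t)" if "1 < t" for t
    unfolding G_def[abs_def] using that
    by (auto intro!: derivative_eq_intros Dh Dq simp: power2_eq_square algebra_simps)
  have contG: "continuous_on {a..b} G" if "1 < a" for a b
    using that by (intro continuous_at_imp_continuous_on ballI DERIV_isCont[OF DG]) auto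
  have G1: "G \<tau>1 > 0" using Kf unfolding G_def K_def by (simp add: algebra_simps)
  have Gf: "G \<tau>f = 0" unfolding G_def by simp
  have sq: "x\<^sup>2 < \<tau>f\<^sup>2" if "1 < x" "x < \<tau>f" for x
    using that by (simp add: power_strict_mono)
  have Gpos: "G t > 0" if t: "1 < t" "t < \<tau>f" for t
  proof -
    consider "t < \<tau>1" | "t = \<tau>1" | "\<tau>1 < t" "t \<le> \<tau>2" | "\<tau>2 < t" by linarith
    then show ?thesis
    proof cases
      case 1
      have "G \<tau>1 < G t"
      proof (rule DERIV_neg_imp_decreasing_open[OF 1 _ contG[OF t(1)]])
        fix x assume x: "t < x" "x < \<tau>1"
        have "q2 x > 0" using x t by (intro s1) auto
        moreover have "x\<^sup>2 < \<tau>f\<^sup>2" using x t tauc tauf by (intro sq) auto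
        ultimately show "\<exists>y. (G has_real_derivative y) (at x) \<and> y < 0"
          using x t by (intro exI[of _ "- (q2 x * (\<tau>f\<^sup>2 - x\<^sup>2))"] conjI DG) auto
      qed
      then show ?thesis using G1 by simp
    next
      case 2 then show ?thesis using G1 by simp
    next
      case 3
      have "G \<tau>1 < G t"
      proof (rule DERIV_pos_imp_increasing_open[OF 3(1) _ contG])
        fix x assume x: "\<tau>1 < x" "x < t"
        have "q2 x < 0" using x 3 by (intro s3) auto
        moreover have "x\<^sup>2 < \<tau>f\<^sup>2" using x t tau12 by (intro sq) auto
        ultimately show "\<exists>y. (G has_real_derivative y) (at x) \<and> y > 0"
          using x tau12 by (intro exI[of _ "- (q2 x * (\<tau>f\<^sup>2 - x\<^sup>2))"] conjI DG)
            (auto simp: mult_neg_pos)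
      qed (use tau12 in auto)
      then show ?thesis using G1 by simp
    next
      case 4
      have "G \<tau>f < G t"
      proof (rule DERIV_neg_imp_decreasing_open[OF t(2) _ contG[OF t(1)]])
        fix x assume x: "t < x" "x < \<tau>f"
        have "q2 x > 0" using x 4 by (intro s2) auto
        moreover have "x\<^sup>2 < \<tau>f\<^sup>2" using x t by (intro sq) auto
        ultimately show "\<exists>y. (G has_real_derivative y) (at x) \<and> y < 0"
          using x t by (intro exI[of _ "- (q2 x * (\<tau>f\<^sup>2 - x\<^sup>2))"] conjI DG) auto
      qed
      then show ?thesis using Gf by simp
    qed
  qed
  define L where "L t = 2 * h t - 2 * h \<tau>f - q \<tau>f * (t\<^sup>2 - \<tau>f\<^sup>2)" for t
  have DL: "(L has_real_derivative 2 * t * (q t - q \<tau>f)) (at t)" if "1 < t" for t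
    unfolding L_def[abs_def] using that
    by (auto intro!: derivative_eq_intros Dh simp: power2_eq_square algebra_simps)
  have contL: "continuous_on {a..b} L" if "1 < a" for a b
    using that by (intro continuous_at_imp_continuous_on ballI DERIV_isCont[OF DL]) auto
  have Lpos: "L t > 0" if t: "1 < t" "t < \<tau>f" for t
  proof -
    have "L \<tau>f < L t"
    proof (rule DERIV_neg_imp_decreasing_open[OF t(2) _ contL[OF t(1)]])
      fix x assume x: "t < x" "x < \<tau>f"
      have "q x < q \<tau>f" using x t by (intro qlt) auto
      then show "\<exists>y. (L has_real_derivative y) (at x) \<and> y < 0"
        using x t by (intro exI[of _ "2 * x * (q x - q \<tau>f)"] conjI DL) (auto simp: mult_pos_neg)
    qed
    then show ?thesis unfolding L_def by simp
  qed
  have part1: "q t < (2 * h t - 2 * h \<tau>f) / (t\<^sup>2 - \<tau>f\<^sup>2) \<and>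
            (2 * h t - 2 * h \<tau>f) / (t\<^sup>2 - \<tau>f\<^sup>2) < q \<tau>f" if t: "1 < t" "t < \<tau>f" for t
  proof -
    have d: "\<tau>f\<^sup>2 - t\<^sup>2 > 0" using sq[OF t] by simp
    have e1: "(2 * h t - 2 * h \<tau>f) / (t\<^sup>2 - \<tau>f\<^sup>2) - q t = G t / (\<tau>f\<^sup>2 - t\<^sup>2)"
      using d unfolding G_def by (simp add: field_simps)
    have e2: "q \<tau>f - (2 * h t - 2 * h \<tau>f) / (t\<^sup>2 - \<tau>f\<^sup>2) = L t / (\<tau>f\<^sup>2 - t\<^sup>2)"
      using d unfolding L_def by (simp add: field_simps)
    have "G t / (\<tau>f\<^sup>2 - t\<^sup>2) > 0" "L t / (\<tau>f\<^sup>2 - t\<^sup>2) > 0"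
      using d Gpos[OF t] Lpos[OF t] by auto
    then show ?thesis using e1 e2 by linarith
  qed
  define M where "M t = (2 * h \<tau>f - 2 * h t) / (\<tau>f\<^sup>2 - t\<^sup>2)" for t
  have DM: "(M has_real_derivative 2 * t * G t / ((\<tau>f\<^sup>2 - t\<^sup>2) * (\<tau>f\<^sup>2 - t\<^sup>2))) (at t)"
    if t: "1 < t" "t < \<tau>f" for t
  proof -
    have d: "\<tau>f\<^sup>2 - t\<^sup>2 \<noteq> 0" using sq[OF t] by simp
    have a: "((\<lambda>x. 2 * h \<tau>f - 2 * h x) has_real_derivative - (2 * (t * q t))) (at t)"
      using t by (auto intro!: derivative_eq_intros Dh)
    have b: "((\<lambda>x. \<tau>f\<^sup>2 - x\<^sup>2) has_real_derivative - (2 * t)) (at t)"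
      by (auto intro!: derivative_eq_intros simp: power2_eq_square)
    show ?thesis unfolding M_def[abs_def]
      using DERIV_divide[OF a b d] unfolding G_def
      by (simp add: algebra_simps)
  qed
  have part2: "M b < M t" if "1 < b" "b < t" "t < \<tau>f" for b t
  proof (rule DERIV_pos_imp_increasing_open[OF that(2)])
    fix x assume x: "b < x" "x < t"
    have "G x > 0" using x that by (intro Gpos) auto
    moreover have "\<tau>f\<^sup>2 - x\<^sup>2 > 0" using sq[of x] x that by auto
    ultimately show "\<exists>y. (M has_real_derivative y) (at x) \<and> y > 0"
      using x that
      by (intro exI[of _ "2 * x * G x / ((\<tau>f\<^sup>2 - x\<^sup>2) * (\<tau>f\<^sup>2 - x\<^sup>2))"] conjI DM)
        (auto intro!: divide_pos_pos)
  next
    show "continuous_on {b..t} M"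
      using that by (intro continuous_at_imp_continuous_on ballI DERIV_isCont[OF DM]) auto
  qed
  show ?thesis using part1 part2 unfolding M_def by blast
qed


theorem proposition3p2:
  fixes S \<gamma> \<tau>1 \<tau>2 \<tau>c \<tau>f :: real and h :: "real \<Rightarrow> real"
  defines "p \<equiv> pres S \<gamma>"
  assumes gamma: "1 < \<gamma>" "\<gamma> < 2"
    and S_pos: "0 < S"
    and tau12: "1 < \<tau>1" "\<tau>1 < \<tau>2"
    and p1_neg: "\<forall>\<tau>>1. deriv p \<tau> < 0"
    and p2_pos1: "\<forall>\<tau>. 1 < \<tau> \<and> \<tau> < \<tau>1 \<longrightarrow> deriv (deriv p) \<tau> > 0"
    and p2_pos2: "\<forall>\<tau>>\<tau>2. deriv (deriv p) \<tau> > 0"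
    and p2_neg: "\<forall>\<tau>. \<tau>1 < \<tau> \<and> \<tau> < \<tau>2 \<longrightarrow> deriv (deriv p) \<tau> < 0"
    and h_deriv: "\<forall>\<tau>>1. (h has_real_derivative \<tau> * deriv p \<tau>) (at \<tau>)"
    and tauc: "\<tau>1 < \<tau>c"
      "deriv p \<tau>1 = (2 * h \<tau>c - 2 * h \<tau>1) / (\<tau>c\<^sup>2 - \<tau>1\<^sup>2)"
    and tauc_unique: "\<forall>t>\<tau>1. deriv p \<tau>1 = (2 * h t - 2 * h \<tau>1) / (t\<^sup>2 - \<tau>1\<^sup>2) \<longrightarrow> t = \<tau>c"
    and tauf: "\<tau>c < \<tau>f"
  shows "(\<forall>\<tau>. 1 < \<tau> \<and> \<tau> < \<tau>f \<longrightarrow>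
            deriv p \<tau> < (2 * h \<tau> - 2 * h \<tau>f) / (\<tau>\<^sup>2 - \<tau>f\<^sup>2) \<and>
            (2 * h \<tau> - 2 * h \<tau>f) / (\<tau>\<^sup>2 - \<tau>f\<^sup>2) < deriv p \<tau>f)
       \<and> (\<forall>\<tau>b. 1 < \<tau>b \<and> \<tau>b < \<tau>f \<longrightarrow>
            (\<forall>\<tau>. \<tau>b < \<tau> \<and> \<tau> < \<tau>f \<longrightarrow>
               (2 * h \<tau>f - 2 * h \<tau>b) / (\<tau>f\<^sup>2 - \<tau>b\<^sup>2) < (2 * h \<tau>f - 2 * h \<tau>) / (\<tau>f\<^sup>2 - \<tau>\<^sup>2)))"
proof -
  have dp: "deriv p t = - S * \<gamma> * (t - 1) powr (- \<gamma> - 1) + 2 / t ^ 3" if "1 < t" for t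
    unfolding p_def using pres_d1[OF that] by (rule DERIV_imp_deriv)
  have Dq: "(deriv p has_real_derivative deriv (deriv p) t) (at t)" if t: "1 < t" for t
  proof -
    have "(deriv p has_real_derivative
          (S * \<gamma> * (\<gamma> + 1) * (t - 1) powr (- \<gamma> - 2) - 6 / t ^ 4)) (at t)"
      by (rule has_field_derivative_transform_within_open[OF pres_d2[OF t], of "{1<..}"])
        (use t dp in auto)
    then show ?thesis using DERIV_imp_deriv by metis
  qed
  show ?thesis
    by (rule key[of "deriv p" "deriv (deriv p)"])
      (use Dq h_deriv tau12 p2_pos1 p2_pos2 p2_neg tauc tauf in auto)
qed


end
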